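(* Let $c>0$ and let $F$ be defined by $$F(\theta)=\frac{\int_{0}^{\theta}\int_{0}^{\theta}e^{c\cos(a-b)}\,da\,db}{2\pi\int_{0}^{2\pi}e^{c\cos a}\,da}-\Big(\frac{\theta}{2\pi}\Big)^{2}.$$ Let $\theta_1,\theta_2,\theta_3\ge0$ with $\theta_1+\theta_2+\theta_3=2\pi$ and $\theta_1\ge\pi$. Then $$-3F(2\pi/3)+\sum_{i=1}^3F(\theta_i)\le-\frac{1}{\pi^2}\cdot\frac{13}{9}\cdot\frac{I_1(c)}{I_0(c)}\sum_{i=1}^3\Big(\frac{\theta_i}{2\pi}-\frac13\Big)^2.$$
   Context: $I_\alpha$ denotes the modified Bessel function of the first kind of order $\alpha\ge0$: $I_\alpha(x)=\frac{(x/2)^\alpha}{\sqrt\pi\,\Gamma(\alpha+1/2)}\int_{-1}^1e^{xt}(1-t^2)^{\alpha-1/2}\,dt$. In the paper $c=\rho rs/(1-\rho^2)$ with $0<\rho<1$, $r,s>0$, and $I_1(c)/I_0(c)=\lambda^{r,s}_{1,2}$ is the first Fourier multiplier of the spherical noise operator on the circle. *)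

theory Defs
  imports "HOL-Analysis.Analysis"
begin

text \<open>Modified Bessel function of the first kind, via the Poisson integral representation
  I_alpha(x) = (x/2)^alpha / (sqrt pi * Gamma(alpha+1/2)) * int_{-1}^{1} e^{xt} (1-t^2)^{alpha-1/2} dt.\<close>
definition besselI :: "real \<Rightarrow> real \<Rightarrow> real" where
  "besselI \<alpha> x = (x / 2) powr \<alpha> / (sqrt pi * Gamma (\<alpha> + 1/2)) *
      (LBINT t=-1..1. exp (x * t) * (1 - t\<^sup>2) powr (\<alpha> - 1/2))"

definition Fc :: "real \<Rightarrow> real \<Rightarrow> real" where
  "Fc c \<theta> = (LBINT a=0..\<theta>. (LBINT b=0..\<theta>. exp (c * cos (a - b)))) /
      (2 * pi * (LBINT a=0..2*pi. exp (c * cos a))) - (\<theta> / (2 * pi))\<^sup>2"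

end

theory Submission imports Defs begin

lemma integral_flip:
  fixes f :: "real \<Rightarrow> real"
  shows "integral {a..b} (\<lambda>x. f (a + b - x)) = integral {a..b} f"
proof -
  have "integral {-b - (-(a+b)) .. -a - (-(a+b))} (\<lambda>x. (\<lambda>y. f (-y)) (x + (-(a+b)))) = integral {-b..-a} (\<lambda>y. f (-y))"
    by (rule integral_shift_real_ivl)
  also have "\<dots> = integral {a..b} f" by simp
  finally show ?thesis by (simp add: algebra_simps)
qed

lemma LB_eq_integral:
  fixes f :: "real \<Rightarrow> real"
  assumes "a \<le> b" "continuous_on {a..b} f"
  shows "(LBINT x=a..b. f x) = integral {a..b} f"
  using assms by (intro interval_integral_eq_integral borel_integrable_atLeastAtMost')



lemma sq_powr_neg_half: "s > 0 \<Longrightarrow> (s\<^sup>2) powr (- 1/2) * s = (1::real)"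
proof -
  assume s: "s > 0"
  have "(s\<^sup>2) = s powr 2" using s by (simp add: powr_realpow)
  then have "(s\<^sup>2) powr (- 1/2) = s powr (2 * (-1/2))" by (simp only: powr_powr)
  also have "\<dots> = inverse s" using s by (simp add: powr_minus)
  finally show ?thesis using s by simp
qed

lemma sq_powr_half: "s \<ge> 0 \<Longrightarrow> (s\<^sup>2) powr (1/2) = (s::real)"
  by (simp add: powr_half_sqrt)

lemma bessel_subst:
  fixes c :: real and w :: "real \<Rightarrow> real"
  assumes wc: "\<And>x. 0 < x \<Longrightarrow> x < pi \<Longrightarrow> isCont w (- cos x)"
    and wnn: "\<And>t. 0 \<le> w t"
    and wi: "\<And>x. 0 < x \<Longrightarrow> x < pi \<Longrightarrow> w (- cos x) * sin x = v x"
    and vc: "continuous_on {0..pi} v"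
  shows "(LBINT x=-1..1. w x) = integral {0..pi} v"
proof -
  have e: "(-1::ereal) = ereal (-1)" "(1::ereal) = ereal 1" by (simp_all add: one_ereal_def)
  have sub: "(LBINT x=ereal (-1)..ereal 1. w x) = (LBINT x=ereal 0..ereal pi. w (- cos x) * sin x)"
  proof (rule interval_integral_substitution_nonneg(2)[where g="\<lambda>x. - cos x" and g'=sin])
    show "ereal 0 < ereal pi" by simp
    show "DERIV (\<lambda>x. - cos x) x :> sin x" for x by (auto intro!: derivative_eq_intros)
    show "isCont w (- cos x)" if "ereal 0 < ereal x" "ereal x < ereal pi" for x
      using that wc by auto
    show "isCont sin x" for x :: real by (rule isCont_sin)
    show "0 \<le> w (- cos x)" for x by (rule wnn)
    show "0 \<le> sin x" if "ereal 0 \<le> ereal x" "ereal x \<le> ereal pi" for x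
      using that by (auto intro!: sin_ge_zero)
    show "((ereal \<circ> (\<lambda>x. - cos x) \<circ> real_of_ereal) \<longlongrightarrow> ereal (-1)) (at_right (ereal 0))"
      unfolding ereal_tendsto_simps
      by (rule tendsto_eq_intros refl | simp)+
    show "((ereal \<circ> (\<lambda>x. - cos x) \<circ> real_of_ereal) \<longlongrightarrow> ereal 1) (at_left (ereal pi))"
      unfolding ereal_tendsto_simps
      by (rule tendsto_eq_intros refl | simp)+
    have "set_integrable lborel {0<..<pi} v"
      by (rule set_integrable_subset[OF borel_integrable_atLeastAtMost'[OF vc]]) auto
    then show "set_integrable lborel (einterval (ereal 0) (ereal pi)) (\<lambda>x. w (- cos x) * sin x)"
      by (subst set_integrable_cong[where f'=v]) (auto simp: wi)
  qed
  also have "\<dots> = (LBINT x=ereal 0..ereal pi. v x)"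
    by (rule interval_integral_cong) (auto simp: wi)
  also have "\<dots> = integral {0..pi} v"
    using LB_eq_integral[OF _ vc] by simp
  finally show ?thesis by (simp add: one_ereal_def)
qed

lemma bessel0:
  fixes c :: real assumes c: "c > 0"
  shows "besselI 0 c = integral {0..pi} (\<lambda>u. exp (c * cos u)) / pi"
proof -
  have "(LBINT t=-1..1. exp (c * t) * (1 - t\<^sup>2) powr (- 1/2))
      = integral {0..pi} (\<lambda>x. exp (c * cos (0 + pi - x)))"
  proof (rule bessel_subst)
    show "isCont (\<lambda>t. exp (c * t) * (1 - t\<^sup>2) powr (- 1/2)) (- cos x)" if "0 < x" "x < pi" for x
    proof -
      from that have "sin x > 0" by (simp add: sin_gt_zero)
      then have "1 - (- cos x)\<^sup>2 > 0" by (simp add: sin_squared_eq[symmetric])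
      then show ?thesis by (auto intro!: continuous_intros)
    qed
    show "0 \<le> exp (c * t) * (1 - t\<^sup>2) powr (- 1/2)" for t by simp
    show "exp (c * - cos x) * (1 - (- cos x)\<^sup>2) powr (- 1/2) * sin x = exp (c * cos (0 + pi - x))"
      if "0 < x" "x < pi" for x
    proof -
      from that have "sin x > 0" by (simp add: sin_gt_zero)
      then have "(1 - (- cos x)\<^sup>2) powr (- 1/2) * sin x = 1"
        using sq_powr_neg_half[of "sin x"] by (simp add: sin_squared_eq)
      then show ?thesis by (simp add: mult.assoc)
    qed
    show "continuous_on {0..pi} (\<lambda>x. exp (c * cos (0 + pi - x)))" by (intro continuous_intros)
  qed
  also have "\<dots> = integral {0..pi} (\<lambda>u. exp (c * cos u))"
    by (rule integral_flip)
  finally have I: "(LBINT t=-1..1. exp (c * t) * (1 - t\<^sup>2) powr (- 1/2)) = integral {0..pi} (\<lambda>u. exp (c * cos u))" .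
  have e: "(-1::ereal) = ereal (-1)" by (simp add: one_ereal_def)
  show ?thesis unfolding besselI_def using c I
    by (simp add: Gamma_one_half_real e)
qed

lemma bessel1:
  fixes c :: real assumes c: "c > 0"
  shows "besselI 1 c = integral {0..pi} (\<lambda>u. exp (c * cos u) * cos u) / pi"
proof -
  have "(LBINT t=-1..1. exp (c * t) * (1 - t\<^sup>2) powr (1/2))
      = integral {0..pi} (\<lambda>x. exp (c * cos (0 + pi - x)) * (sin (0 + pi - x))\<^sup>2)"
  proof (rule bessel_subst)
    show "isCont (\<lambda>t. exp (c * t) * (1 - t\<^sup>2) powr (1/2)) (- cos x)" if "0 < x" "x < pi" for x
    proof -
      from that have "sin x > 0" by (simp add: sin_gt_zero)
      then have "1 - (- cos x)\<^sup>2 > 0" by (simp add: sin_squared_eq[symmetric])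
      then show ?thesis by (auto intro!: continuous_intros)
    qed
    show "0 \<le> exp (c * t) * (1 - t\<^sup>2) powr (1/2)" for t by simp
    show "exp (c * - cos x) * (1 - (- cos x)\<^sup>2) powr (1/2) * sin x = exp (c * cos (0 + pi - x)) * (sin (0 + pi - x))\<^sup>2"
      if "0 < x" "x < pi" for x
    proof -
      from that have "sin x > 0" by (simp add: sin_gt_zero)
      then have "(1 - (- cos x)\<^sup>2) powr (1/2) = sin x"
        using sq_powr_half[of "sin x"] by (simp add: sin_squared_eq)
      then show ?thesis by (simp add: power2_eq_square)
    qed
    show "continuous_on {0..pi} (\<lambda>x. exp (c * cos (0 + pi - x)) * (sin (0 + pi - x))\<^sup>2)" by (intro continuous_intros)
  qed
  also have "\<dots> = integral {0..pi} (\<lambda>u. exp (c * cos u) * (sin u)\<^sup>2)"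
    by (rule integral_flip[where f="\<lambda>u. exp (c * cos u) * (sin u)\<^sup>2"])
  finally have I: "(LBINT t=-1..1. exp (c * t) * (1 - t\<^sup>2) powr (1/2)) = integral {0..pi} (\<lambda>u. exp (c * cos u) * (sin u)\<^sup>2)" .
  have ftc: "((\<lambda>u. exp (c * cos u) * cos u - c * (exp (c * cos u) * (sin u)\<^sup>2)) has_integral
      (exp (c * cos pi) * sin pi - exp (c * cos 0) * sin 0)) {0..pi}"
    by (rule fundamental_theorem_of_calculus)
       (auto intro!: derivative_eq_intros simp: has_real_derivative_iff_has_vector_derivative[symmetric] power2_eq_square algebra_simps)
  have int1: "(\<lambda>u. exp (c * cos u) * cos u) integrable_on {0..pi}"
    by (intro integrable_continuous_interval continuous_intros)
  have int2: "(\<lambda>u. c * (exp (c * cos u) * (sin u)\<^sup>2)) integrable_on {0..pi}"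
    by (intro integrable_continuous_interval continuous_intros)
  have "integral {0..pi} (\<lambda>u. exp (c * cos u) * cos u) - integral {0..pi} (\<lambda>u. c * (exp (c * cos u) * (sin u)\<^sup>2)) = 0"
    using integral_unique[OF ftc] integral_diff[OF int1 int2] by simp
  then have J: "c * integral {0..pi} (\<lambda>u. exp (c * cos u) * (sin u)\<^sup>2) = integral {0..pi} (\<lambda>u. exp (c * cos u) * cos u)"
    by simp
  have e: "(-1::ereal) = ereal (-1)" by (simp add: one_ereal_def)
  have G: "Gamma (1 + 1/2 :: real) = sqrt pi / 2"
  proof -
    have "(1/2::real) \<notin> \<int>\<^sub>\<le>\<^sub>0"
    proof
      assume "(1/2::real) \<in> \<int>\<^sub>\<le>\<^sub>0"
      then obtain n :: int where "(1/2::real) = of_int n" by (auto elim!: nonpos_Ints_cases)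
      then have "(1::real) = 2 * of_int n" by simp
      then have "(1::int) = 2 * n" by linarith
      then show False by presburger
    qed
    then show ?thesis using Gamma_plus1[of "1/2::real"] by (simp add: Gamma_one_half_real add.commute)
  qed
  show ?thesis unfolding besselI_def using c I J G
    by (simp add: e field_simps)
qed

definition gg :: "real \<Rightarrow> real \<Rightarrow> real" where "gg c u = exp (c * cos u)"
definition EE :: "real \<Rightarrow> real \<Rightarrow> real" where "EE c x = integral {0..x} (gg c)"

lemma gg_cont[continuous_intros]: "continuous_on S (gg c)"
  unfolding gg_def by (intro continuous_intros)

lemma gg_int: "gg c integrable_on {a..b}"
  by (intro integrable_continuous_interval gg_cont)

lemma gg_even: "gg c (- x) = gg c x" by (simp add: gg_def)

lemma EE_deriv: "0 \<le> x \<Longrightarrow> x \<le> b \<Longrightarrow> (EE c has_vector_derivative gg c x) (at x within {0..b})"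
  unfolding EE_def by (rule integral_has_vector_derivative) (auto intro: gg_cont)

lemma EE_cont: "continuous_on {0..b} (EE c)"
  by (rule continuous_on_vector_derivative) (auto intro: EE_deriv)

lemma inner_int:
  assumes "0 \<le> a" "a \<le> t"
  shows "integral {0..t} (\<lambda>b. gg c (a - b)) = EE c a + EE c (t - a)"
proof -
  have i: "(\<lambda>b. gg c (a - b)) integrable_on {0..t}"
    by (intro integrable_continuous_interval continuous_intros) (simp add: gg_def continuous_intros)
  have "integral {0..t} (\<lambda>b. gg c (a - b)) = integral {0..a} (\<lambda>b. gg c (a - b)) + integral {a..t} (\<lambda>b. gg c (a - b))"
    using Henstock_Kurzweil_Integration.integral_combine[OF assms i] by simp
  also have "integral {0..a} (\<lambda>b. gg c (a - b)) = EE c a"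
    unfolding EE_def using integral_flip[of 0 a "gg c"] by simp
  also have "integral {a..t} (\<lambda>b. gg c (a - b)) = integral {a..t} (\<lambda>b. gg c (b + - a))"
    by (rule integral_cong) (metis gg_even minus_diff_eq diff_conv_add_uminus)
  also have "\<dots> = EE c (t - a)"
    unfolding EE_def using integral_shift_real_ivl[of 0 "-a" "t - a" "gg c"] by simp
  finally show ?thesis .
qed

lemma EE_0: "EE c 0 = 0" by (simp add: EE_def)

lemma EE_parts:
  assumes "0 \<le> t"
  shows "integral {0..t} (EE c) = integral {0..t} (\<lambda>u. (t - u) * gg c u)"
proof -
  have ftc: "((\<lambda>u. (t - u) * gg c u - EE c u) has_integral ((t - t) * EE c t - (t - 0) * EE c 0)) {0..t}"
  proof (rule fundamental_theorem_of_calculus[OF assms])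
    fix x assume x: "x \<in> {0..t}"
    have "(EE c has_vector_derivative gg c x) (at x within {0..t})" using x EE_deriv by auto
    then have "(EE c has_real_derivative gg c x) (at x within {0..t})"
      by (simp add: has_real_derivative_iff_has_vector_derivative)
    then have "((\<lambda>u. (t - u) * EE c u) has_real_derivative (t - x) * gg c x - EE c x) (at x within {0..t})"
      by (auto intro!: derivative_eq_intros)
    then show "((\<lambda>u. (t - u) * EE c u) has_vector_derivative (t - x) * gg c x - EE c x) (at x within {0..t})"
      by (simp add: has_real_derivative_iff_has_vector_derivative)
  qed
  have i1: "(\<lambda>u. (t - u) * gg c u) integrable_on {0..t}"
    by (intro integrable_continuous_interval continuous_intros)
  have i2: "EE c integrable_on {0..t}"
    by (intro integrable_continuous_interval EE_cont)
  show ?thesis using integral_unique[OF ftc] integral_diff[OF i1 i2] EE_0 by simp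
qed

lemma double_int:
  assumes "0 \<le> t"
  shows "(LBINT a=0..t. (LBINT b=0..t. exp (c * cos (a - b)))) = 2 * integral {0..t} (\<lambda>u. (t - u) * gg c u)"
proof -
  have "(LBINT a=0..t. (LBINT b=0..t. exp (c * cos (a - b)))) = (LBINT a=0..t. EE c a + EE c (t - a))"
  proof (rule interval_integral_cong)
    fix a assume "a \<in> einterval (min 0 (ereal t)) (max 0 (ereal t))"
    then have a: "0 < a" "a < t" using assms by (auto simp: min_def max_def zero_ereal_def split: if_splits)
    have "(LBINT b=0..t. exp (c * cos (a - b))) = integral {0..t} (\<lambda>b. gg c (a - b))"
      unfolding gg_def zero_ereal_def using assms by (intro LB_eq_integral) (auto intro!: continuous_intros)
    then show "(LBINT b=0..t. exp (c * cos (a - b))) = EE c a + EE c (t - a)"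
      using inner_int[of a t c] a by simp
  qed
  also have "\<dots> = integral {0..t} (\<lambda>a. EE c a + EE c (t - a))"
  unfolding zero_ereal_def proof (rule LB_eq_integral[OF assms])
    have "continuous_on {0..t} (\<lambda>a. EE c (t - a))"
      by (rule continuous_on_compose2[OF EE_cont[of t c]]) (auto intro!: continuous_intros)
    then show "continuous_on {0..t} (\<lambda>a. EE c a + EE c (t - a))"
      by (intro continuous_intros EE_cont)
  qed
  also have "\<dots> = 2 * integral {0..t} (EE c)"
  proof -
    have i2: "(\<lambda>a. EE c (t - a)) integrable_on {0..t}"
      by (intro integrable_continuous_interval continuous_on_compose2[OF EE_cont[of t c]]) (auto intro!: continuous_intros)
    have "integral {0..t} (\<lambda>a. EE c (t - a)) = integral {0..t} (EE c)"
      using integral_flip[of 0 t "EE c"] by simp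
    then show ?thesis
      using integral_add[OF integrable_continuous_interval[OF EE_cont] i2] by simp
  qed
  finally show ?thesis using EE_parts[OF assms] by simp
qed



lemma HK_nonneg: "(f::real\<Rightarrow>real) integrable_on S \<Longrightarrow> (\<And>x. x \<in> S \<Longrightarrow> 0 \<le> f x) \<Longrightarrow> 0 \<le> integral S f"
  by (rule Henstock_Kurzweil_Integration.integral_nonneg)

lemma HK_nonpos: "(f::real\<Rightarrow>real) integrable_on S \<Longrightarrow> (\<And>x. x \<in> S \<Longrightarrow> f x \<le> 0) \<Longrightarrow> integral S f \<le> 0"
  using Henstock_Kurzweil_Integration.integral_nonneg[of "\<lambda>x. - f x" S] by (simp add: integrable_neg_iff)

lemma crossing:
  fixes q :: "real \<Rightarrow> real" and m p :: real
  assumes cont: "continuous_on {0..pi} q"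
    and m: "0 \<le> m" "m \<le> p" "p \<le> pi"
    and q0: "\<And>u. 0 \<le> u \<Longrightarrow> u \<le> m \<Longrightarrow> 0 \<le> q u"
    and qdec: "\<And>x y. m \<le> x \<Longrightarrow> x \<le> y \<Longrightarrow> y \<le> p \<Longrightarrow> q y \<le> q x"
    and qinc: "\<And>x y. p \<le> x \<Longrightarrow> x \<le> y \<Longrightarrow> y \<le> pi \<Longrightarrow> q x \<le> q y"
    and Hpi: "integral {0..pi} q = 0"
    and w: "0 \<le> w" "w \<le> w'" "w' \<le> pi" "integral {0..w} q < 0"
  shows "integral {0..w'} q \<le> 0"
proof -
  define H where "H v = integral {0..v} q" for v
  have intab: "q integrable_on {a..b}" if "0 \<le> a" "b \<le> pi" for a b
    by (rule integrable_continuous_interval) (use cont that in \<open>auto intro: continuous_on_subset\<close>)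
  have diff: "H b - H a = integral {a..b} q" if "0 \<le> a" "a \<le> b" "b \<le> pi" for a b
  proof -
    have "integral {0..a} q + integral {a..b} q = integral {0..b} q"
      by (rule Henstock_Kurzweil_Integration.integral_combine) (use that intab in auto)
    then show ?thesis unfolding H_def by simp
  qed
  have Hm: "0 \<le> H v" if "0 \<le> v" "v \<le> m" for v
    unfolding H_def by (rule HK_nonneg) (use that m intab q0 in auto)
  have incp: "H w' \<le> 0" if "p \<le> w" "w \<le> w'" "w' \<le> pi" "H w < 0" for w w'
  proof (rule ccontr)
    assume "\<not> H w' \<le> 0"
    then have pos: "H w' > 0" by simp
    have "q w' > 0"
    proof (rule ccontr)
      assume "\<not> q w' > 0"
      note nq = this
      have "integral {w..w'} q \<le> 0"
      proof (rule HK_nonpos)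
        show "q integrable_on {w..w'}" using intab that m by auto
        fix x assume "x \<in> {w..w'}"
        then have "q x \<le> q w'" using qinc[of x w'] that by auto
        then show "q x \<le> 0" using nq by linarith
      qed
      then show False using diff[of w w'] that pos m by linarith
    qed
    then have "0 \<le> integral {w'..pi} q"
      by (intro HK_nonneg) (use that m intab qinc[of w'] in \<open>force+\<close>)
    then have "H pi \<ge> H w'" using diff[of w' pi] that m by linarith
    moreover have "H pi = 0" using Hpi unfolding H_def .
    ultimately show False using pos by linarith
  qed
  have decp: "H w' < 0" if "m \<le> w" "w \<le> w'" "w' \<le> p" "H w < 0" for w w'
  proof -
    have "q w < 0"
    proof (rule ccontr)
      assume "\<not> q w < 0"
      then have "0 \<le> integral {m..w} q"
        by (intro HK_nonneg) (use that m intab qdec[of _ w] in \<open>force+\<close>)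
      then show False using diff[of m w] that m Hm[of m] by linarith
    qed
    then have "integral {w..w'} q \<le> 0"
      by (intro HK_nonpos) (use that m intab qdec[of w] in \<open>force+\<close>)
    then show ?thesis using diff[of w w'] that m by linarith
  qed
  have Hw: "H w < 0" using w(4) unfolding H_def .
  have "m < w" using Hm[of w] Hw w by force
  show ?thesis
  proof (cases "p \<le> w")
    case True then show ?thesis using incp[of w w'] Hw w unfolding H_def by auto
  next
    case False
    show ?thesis
    proof (cases "w' \<le> p")
      case True then show ?thesis using decp[of w w'] Hw False \<open>m < w\<close> w unfolding H_def by auto
    next
      case F2: False
      have "H p < 0" using decp[of w p] Hw False \<open>m < w\<close> w by auto
      then show ?thesis using incp[of p w'] F2 w unfolding H_def by auto
    qed
  qed
qed


lemma Hcont: "continuous_on {0..pi} q \<Longrightarrow> continuous_on {0..pi} (\<lambda>v. integral {0..v} (q::real\<Rightarrow>real))"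
  by (rule continuous_on_vector_derivative) (auto intro!: integral_has_vector_derivative)

lemma gg_anti: "c > 0 \<Longrightarrow> 0 \<le> x \<Longrightarrow> x \<le> y \<Longrightarrow> y \<le> pi \<Longrightarrow> gg c y \<le> gg c x"
  unfolding gg_def using cos_monotone_0_pi_le[of x y] by auto

lemma weighted:
  fixes q :: "real \<Rightarrow> real"
  assumes cont: "continuous_on {0..pi} q" and c: "c > 0"
    and cross: "\<And>w w'. 0 \<le> w \<Longrightarrow> w \<le> w' \<Longrightarrow> w' \<le> pi \<Longrightarrow> integral {0..w} q < 0 \<Longrightarrow> integral {0..w'} q \<le> 0"
    and Hs: "0 \<le> integral {0..pi} (\<lambda>v. integral {0..v} q * sin v)"
  shows "0 \<le> integral {0..pi} (\<lambda>v. integral {0..v} q * sin v * gg c v)"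
proof -
  define H where "H v = integral {0..v} q" for v
  have Hc: "continuous_on {0..pi} H" unfolding H_def by (rule Hcont[OF cont])
  have i1: "(\<lambda>v. H v * sin v * gg c v) integrable_on {0..pi}"
    by (intro integrable_continuous_interval continuous_intros Hc)
  have i2: "(\<lambda>v. H v * sin v) integrable_on {0..pi}"
    by (intro integrable_continuous_interval continuous_intros Hc)
  define N where "N = {w \<in> {0..pi}. H w < 0}"
  show ?thesis
  proof (cases "N = {}")
    case True
    then have "\<And>v. v \<in> {0..pi} \<Longrightarrow> 0 \<le> H v" unfolding N_def by force
    then show ?thesis unfolding H_def[symmetric]
      by (intro HK_nonneg i1) (auto intro!: mult_nonneg_nonneg sin_ge_zero simp: gg_def)
  next
    case False
    have bdd: "bdd_below N" unfolding N_def by (rule bdd_belowI[of _ 0]) auto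
    define s where "s = Inf N"
    have s0: "0 \<le> s" unfolding s_def using False by (intro cInf_greatest) (auto simp: N_def)
    obtain w0 where w0: "w0 \<in> N" using False by auto
    have spi: "s \<le> pi" unfolding s_def using cInf_lower[OF w0 bdd] w0 by (auto simp: N_def)
    have pt: "0 \<le> H v * sin v * (gg c v - gg c s)" if v: "v \<in> {0..pi}" for v
    proof -
      have sv: "0 \<le> sin v" using v by (auto intro: sin_ge_zero)
      consider "v < s" | "v = s" | "s < v" by linarith
      then show ?thesis
      proof cases
        case 1
        have "0 \<le> H v"
        proof (rule ccontr)
          assume "\<not> 0 \<le> H v"
          then have "v \<in> N" using v by (auto simp: N_def)
          then have "s \<le> v" unfolding s_def by (rule cInf_lower[OF _ bdd])
          then show False using 1 by simp
        qed
        moreover have "gg c s \<le> gg c v" using gg_anti[OF c, of v s] 1 v spi by auto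
        ultimately show ?thesis using sv by (auto intro!: mult_nonneg_nonneg)
      next
        case 2 then show ?thesis by simp
      next
        case 3
        then obtain w where w: "w \<in> N" "w < v" using cInf_less_iff[OF False bdd] unfolding s_def by auto
        then have "H v \<le> 0" using cross[of w v] v unfolding N_def H_def by auto
        moreover have "gg c v \<le> gg c s" using gg_anti[OF c, of s v] 3 v s0 by auto
        ultimately show ?thesis using sv
          by (metis mult_nonpos_nonpos mult_nonpos_nonneg diff_le_0_iff_le)
      qed
    qed
    have "0 \<le> integral {0..pi} (\<lambda>v. H v * sin v * (gg c v - gg c s))"
      by (rule HK_nonneg) (use pt in \<open>auto intro!: integrable_continuous_interval continuous_intros Hc\<close>)
    also have "\<dots> = integral {0..pi} (\<lambda>v. H v * sin v * gg c v) - gg c s * integral {0..pi} (\<lambda>v. H v * sin v)"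
    proof -
      have "integral {0..pi} (\<lambda>v. H v * sin v * (gg c v - gg c s)) = integral {0..pi} (\<lambda>v. H v * sin v * gg c v - gg c s * (H v * sin v))"
        by (simp add: algebra_simps)
      also have "\<dots> = integral {0..pi} (\<lambda>v. H v * sin v * gg c v) - integral {0..pi} (\<lambda>v. gg c s * (H v * sin v))"
        by (rule integral_diff[OF i1]) (intro integrable_continuous_interval continuous_intros Hc)
      finally show ?thesis by simp
    qed
    finally have "gg c s * integral {0..pi} (\<lambda>v. H v * sin v) \<le> integral {0..pi} (\<lambda>v. H v * sin v * gg c v)" by simp
    moreover have "0 \<le> gg c s * integral {0..pi} (\<lambda>v. H v * sin v)"
      using Hs unfolding H_def by (simp add: gg_def)
    ultimately show ?thesis unfolding H_def by linarith
  qed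
qed

lemma H_deriv: "continuous_on {0..pi} q \<Longrightarrow> x \<in> {0..pi} \<Longrightarrow>
   ((\<lambda>v. integral {0..v} q) has_real_derivative (q x::real)) (at x within {0..pi})"
  by (rule integral_has_real_derivative)

lemma ibp1:
  fixes q :: "real \<Rightarrow> real"
  assumes cont: "continuous_on {0..pi} q" and Hpi: "integral {0..pi} q = 0"
  shows "integral {0..pi} (\<lambda>v. integral {0..v} q * sin v) = integral {0..pi} (\<lambda>v. q v * cos v)"
proof -
  define H where "H v = integral {0..v} q" for v
  have Hc: "continuous_on {0..pi} H" unfolding H_def by (rule Hcont[OF cont])
  have ftc: "((\<lambda>v. H v * sin v - q v * cos v) has_integral ((- H pi * cos pi) - (- H 0 * cos 0))) {0..pi}"
  proof (rule fundamental_theorem_of_calculus)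
    fix x assume x: "x \<in> {0..pi}"
    have "((\<lambda>v. - H v * cos v) has_real_derivative (- q x * cos x + H x * sin x)) (at x within {0..pi})"
      using H_deriv[OF cont x] unfolding H_def[symmetric] by (auto intro!: derivative_eq_intros)
    then show "((\<lambda>v. - H v * cos v) has_vector_derivative H x * sin x - q x * cos x) (at x within {0..pi})"
      by (simp add: has_real_derivative_iff_has_vector_derivative algebra_simps)
  qed simp
  have "H pi = 0" "H 0 = 0" using Hpi by (auto simp: H_def)
  then have "integral {0..pi} (\<lambda>v. H v * sin v - q v * cos v) = 0" using integral_unique[OF ftc] by simp
  moreover have "integral {0..pi} (\<lambda>v. H v * sin v - q v * cos v) = integral {0..pi} (\<lambda>v. H v * sin v) - integral {0..pi} (\<lambda>v. q v * cos v)"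
    by (intro integral_diff integrable_continuous_interval continuous_intros Hc cont)
  ultimately show ?thesis unfolding H_def by simp
qed

lemma ibp2:
  fixes q :: "real \<Rightarrow> real"
  assumes cont: "continuous_on {0..pi} q" and Hpi: "integral {0..pi} q = 0"
  shows "integral {0..pi} (\<lambda>v. q v * gg c v) = c * integral {0..pi} (\<lambda>v. integral {0..v} q * sin v * gg c v)"
proof -
  define H where "H v = integral {0..v} q" for v
  have Hc: "continuous_on {0..pi} H" unfolding H_def by (rule Hcont[OF cont])
  have ftc: "((\<lambda>v. q v * gg c v - c * (H v * sin v * gg c v)) has_integral (H pi * gg c pi - H 0 * gg c 0)) {0..pi}"
  proof (rule fundamental_theorem_of_calculus)
    fix x assume x: "x \<in> {0..pi}"
    have "((\<lambda>v. H v * exp (c * cos v)) has_real_derivative (q x * exp (c * cos x) + H x * (exp (c * cos x) * (c * - sin x)))) (at x within {0..pi})"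
      using H_deriv[OF cont x] unfolding H_def[symmetric] by (auto intro!: derivative_eq_intros)
    then show "((\<lambda>v. H v * gg c v) has_vector_derivative q x * gg c x - c * (H x * sin x * gg c x)) (at x within {0..pi})"
      by (simp add: has_real_derivative_iff_has_vector_derivative algebra_simps gg_def)
  qed simp
  have "H pi = 0" "H 0 = 0" using Hpi by (auto simp: H_def)
  then have "integral {0..pi} (\<lambda>v. q v * gg c v - c * (H v * sin v * gg c v)) = 0" using integral_unique[OF ftc] by simp
  moreover have "integral {0..pi} (\<lambda>v. q v * gg c v - c * (H v * sin v * gg c v)) = integral {0..pi} (\<lambda>v. q v * gg c v) - integral {0..pi} (\<lambda>v. c * (H v * sin v * gg c v))"
    by (intro integral_diff integrable_continuous_interval continuous_intros Hc cont)
  ultimately show ?thesis unfolding H_def by simp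
qed

lemma core_abstract:
  fixes q :: "real \<Rightarrow> real" and m p c :: real
  assumes cont: "continuous_on {0..pi} q" and c: "c > 0"
    and m: "0 \<le> m" "m \<le> p" "p \<le> pi"
    and q0: "\<And>u. 0 \<le> u \<Longrightarrow> u \<le> m \<Longrightarrow> 0 \<le> q u"
    and qdec: "\<And>x y. m \<le> x \<Longrightarrow> x \<le> y \<Longrightarrow> y \<le> p \<Longrightarrow> q y \<le> q x"
    and qinc: "\<And>x y. p \<le> x \<Longrightarrow> x \<le> y \<Longrightarrow> y \<le> pi \<Longrightarrow> q x \<le> q y"
    and Hpi: "integral {0..pi} q = 0"
    and qcos: "0 \<le> integral {0..pi} (\<lambda>v. q v * cos v)"
  shows "0 \<le> integral {0..pi} (\<lambda>v. q v * gg c v)"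
proof -
  have "0 \<le> integral {0..pi} (\<lambda>v. integral {0..v} q * sin v * gg c v)"
  proof (rule weighted[OF cont c])
    show "integral {0..w'} q \<le> 0" if "0 \<le> w" "w \<le> w'" "w' \<le> pi" "integral {0..w} q < 0" for w w'
      by (rule crossing[OF cont m q0 qdec qinc Hpi that])
    show "0 \<le> integral {0..pi} (\<lambda>v. integral {0..v} q * sin v)"
      using ibp1[OF cont Hpi] qcos by simp
  qed
  then show ?thesis using ibp2[OF cont Hpi, of c] c by simp
qed

lemma hi_maxgen:
  fixes f F :: "real \<Rightarrow> real"
  assumes a: "0 \<le> a" "a \<le> pi"
    and d: "\<And>x. x \<in> {a..pi} \<Longrightarrow> (F has_real_derivative (x - a) * f x) (at x within {a..pi})"
  shows "((\<lambda>u. max (u - a) 0 * f u) has_integral (F pi - F a)) {0..pi}"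
proof -
  have 1: "((\<lambda>u. max (u - a) 0 * f u) has_integral 0) {0..a}"
    by (rule has_integral_eq[where f="\<lambda>_. 0"]) auto
  have "((\<lambda>u. (u - a) * f u) has_integral (F pi - F a)) {a..pi}"
    by (rule fundamental_theorem_of_calculus) (use a d in \<open>auto simp: has_real_derivative_iff_has_vector_derivative[symmetric]\<close>)
  then have 2: "((\<lambda>u. max (u - a) 0 * f u) has_integral (F pi - F a)) {a..pi}"
    by (rule has_integral_eq[rotated]) auto
  show ?thesis using has_integral_combine[OF a 1 2] by simp
qed

lemma hi_max: "0 \<le> a \<Longrightarrow> a \<le> pi \<Longrightarrow> ((\<lambda>u. max (u - a) 0) has_integral (pi - a)\<^sup>2 / 2) {0..pi}"
proof -
  assume a: "0 \<le> a" "a \<le> pi"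
  have d: "((\<lambda>u. (u - a)\<^sup>2 / 2) has_real_derivative (x - a) * 1) (at x within {a..pi})" for x
    by (auto intro!: derivative_eq_intros)
  show ?thesis using hi_maxgen[where a=a and f="\<lambda>_. 1" and F="\<lambda>u. (u - a)\<^sup>2 / 2", OF a d] by simp
qed

lemma hi_maxcos: "0 \<le> a \<Longrightarrow> a \<le> pi \<Longrightarrow> ((\<lambda>u. max (u - a) 0 * cos u) has_integral (-1 - cos a)) {0..pi}"
proof -
  assume a: "0 \<le> a" "a \<le> pi"
  have d: "((\<lambda>u. (u - a) * sin u + cos u) has_real_derivative (x - a) * cos x) (at x within {a..pi})" for x
    by (auto intro!: derivative_eq_intros simp: algebra_simps)
  show ?thesis using hi_maxgen[where a=a and f=cos and F="\<lambda>u. (u - a) * sin u + cos u", OF a d] by simp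
qed

lemma hi_cos: "(cos has_integral 0) {0..pi}"
proof -
  have "(cos has_integral (sin pi - sin 0)) {0..pi}"
  proof (rule fundamental_theorem_of_calculus)
    fix x :: real
    have "(sin has_real_derivative cos x) (at x within {0..pi})" by (auto intro!: derivative_eq_intros)
    then show "(sin has_vector_derivative cos x) (at x within {0..pi})"
      by (simp add: has_real_derivative_iff_has_vector_derivative)
  qed simp
  then show ?thesis by simp
qed

lemma hi_const: "((\<lambda>u. A) has_integral A * pi) {0..pi}"
  using has_integral_const_real[of A 0 pi] by (simp add: mult.commute)

lemma hi_cos2: "((\<lambda>u. cos u * cos u) has_integral pi / 2) {0..pi}"
proof -
  have "((\<lambda>u. cos u * cos u) has_integral ((pi + sin pi * cos pi)/2 - (0 + sin 0 * cos 0)/2)) {0..pi}"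
  proof (rule fundamental_theorem_of_calculus)
    fix x :: real
    have "((\<lambda>u. (u + sin u * cos u) / 2) has_real_derivative (1 + (cos x * cos x - sin x * sin x)) / 2) (at x within {0..pi})"
      by (auto intro!: derivative_eq_intros)
    moreover have "(1 + (cos x * cos x - sin x * sin x)) / 2 = cos x * cos x"
      using sin_cos_squared_add[of x] by (simp add: power2_eq_square algebra_simps)
    ultimately show "((\<lambda>u. (u + sin u * cos u) / 2) has_vector_derivative cos x * cos x) (at x within {0..pi})"
      by (simp add: has_real_derivative_iff_has_vector_derivative)
  qed simp
  then show ?thesis by simp
qed

definition qq :: "real \<Rightarrow> real \<Rightarrow> real \<Rightarrow> real \<Rightarrow> real \<Rightarrow> real \<Rightarrow> real" where
  "qq A k al t2 t3 u = A - k * cos u + 3 * max (u - 2*pi/3) 0 - max (u - al) 0 - max (u - t2) 0 - max (u - t3) 0"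

lemma qq_cont: "continuous_on S (qq A k al t2 t3)"
  unfolding qq_def by (intro continuous_intros)

lemma qq_int:
  assumes "0 \<le> al" "al \<le> pi" "0 \<le> t2" "t2 \<le> pi" "0 \<le> t3" "t3 \<le> pi"
  shows "(qq A k al t2 t3 has_integral
     (A * pi - k * 0 + 3 * ((pi - 2*pi/3)\<^sup>2/2) - (pi - al)\<^sup>2/2 - (pi - t2)\<^sup>2/2 - (pi - t3)\<^sup>2/2)) {0..pi}"
proof -
  have p: "0 \<le> 2*pi/3" "2*pi/3 \<le> pi" by auto
  show ?thesis unfolding qq_def
    by (intro has_integral_diff has_integral_add has_integral_mult_right hi_max hi_cos p assms
        hi_const)
qed

lemma qq_intcos:
  assumes "0 \<le> al" "al \<le> pi" "0 \<le> t2" "t2 \<le> pi" "0 \<le> t3" "t3 \<le> pi"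
  shows "((\<lambda>u. qq A k al t2 t3 u * cos u) has_integral
     (A * 0 - k * (pi/2) + 3 * (-1 - cos (2*pi/3)) - (-1 - cos al) - (-1 - cos t2) - (-1 - cos t3))) {0..pi}"
proof -
  have p: "0 \<le> 2*pi/3" "2*pi/3 \<le> pi" by auto
  have e: "(\<lambda>u. qq A k al t2 t3 u * cos u) = (\<lambda>u. A * cos u - k * (cos u * cos u) + 3 * (max (u - 2*pi/3) 0 * cos u)
     - max (u - al) 0 * cos u - max (u - t2) 0 * cos u - max (u - t3) 0 * cos u)"
    by (rule ext) (simp add: qq_def algebra_simps)
  show ?thesis unfolding e
    by (intro has_integral_diff has_integral_add has_integral_mult_right hi_maxcos hi_cos hi_cos2 p assms)
qed

lemma cos_lip: fixes x y :: real assumes "x \<le> y" shows "cos x - cos y \<le> y - x"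
proof (cases "x = y")
  case False
  then have "x < y" using assms by simp
  from MVT2[OF this, of cos "\<lambda>t. - sin t"] obtain z where "cos y - cos x = (y - x) * - sin z"
    by (auto intro!: derivative_eq_intros)
  moreover have "- sin z \<ge> -1" by simp
  moreover have "(y - x) * (-1) \<le> (y - x) * - sin z"
    using assms by (intro mult_left_mono) auto
  ultimately show ?thesis by simp
qed simp

lemma D1:
  fixes t2 t3 :: real
  assumes t: "0 \<le> t2" "0 \<le> t3" "t2 + t3 \<le> pi"
  shows "13/9 * (((2*pi - (t2+t3)) / (2*pi) - 1/3)\<^sup>2 + (t2 / (2*pi) - 1/3)\<^sup>2 + (t3 / (2*pi) - 1/3)\<^sup>2)
      \<le> 3/2 + cos (t2 + t3) + cos t2 + cos t3"
proof -
  define al where "al = t2 + t3"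
  define de where "de = t2 - t3"
  define C where "C = cos (al/2)"
  define D where "D = cos (de/2)"
  have t2e: "t2 = al/2 + de/2" and t3e: "t3 = al/2 - de/2" by (simp_all add: al_def de_def field_simps)
  have cs: "cos t2 + cos t3 = 2 * C * D"
    unfolding t2e t3e C_def D_def by (simp add: cos_add cos_diff)
  have ca: "cos al = 2 * C\<^sup>2 - 1"
    unfolding C_def using cos_double_cos[of "al/2"] by simp
  have al0: "0 \<le> al" "al \<le> pi" using t by (auto simp: al_def)
  have C0: "0 \<le> C" unfolding C_def using al0 by (intro cos_ge_zero) auto
  have DC: "C \<le> D"
  proof -
    have "cos (\<bar>de\<bar>/2) = D" unfolding D_def by (cases "de \<ge> 0") (auto simp: abs_if)
    moreover have "cos (al/2) \<le> cos (\<bar>de\<bar>/2)"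
      using t by (intro cos_monotone_0_pi_le) (auto simp: al_def de_def)
    ultimately show ?thesis unfolding C_def by simp
  qed
  have lhs: "1/2 + 4 * C\<^sup>2 \<le> 3/2 + cos al + cos t2 + cos t3"
    using cs ca mult_left_mono[OF DC C0] by (simp add: power2_eq_square)
  have pi0: "pi > 0" by simp
  have Se: "((2*pi - al) / (2*pi) - 1/3)\<^sup>2 + (t2 / (2*pi) - 1/3)\<^sup>2 + (t3 / (2*pi) - 1/3)\<^sup>2
      = (3/2 * (4*pi/3 - al)\<^sup>2 + de\<^sup>2/2) / (4 * pi\<^sup>2)"
    unfolding t2e t3e using pi0 by (simp add: field_simps power2_eq_square)
  have de2: "de\<^sup>2 \<le> al\<^sup>2" using t unfolding al_def de_def abs_le_square_iff[symmetric] by auto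
  show ?thesis
  proof (cases "al \<le> 2*pi/3")
    case True
    have "cos (pi/3) \<le> C" unfolding C_def using True al0 by (intro cos_monotone_0_pi_le) auto
    then have C2: "1/2 \<le> C" by (simp add: cos_60)
    have a1: "(4*pi/3 - al)\<^sup>2 \<le> (4*pi/3)\<^sup>2" using al0 True by (intro power_mono) auto
    have a2: "al\<^sup>2 \<le> (2*pi/3)\<^sup>2" using al0 True by (intro power_mono) auto
    have "(4*pi/3)\<^sup>2 = 16/9 * pi\<^sup>2" "(2*pi/3)\<^sup>2 = 4/9 * pi\<^sup>2" by (simp_all add: power2_eq_square)
    moreover have "\<And>X Y Z P::real. X \<le> 16/9*P \<Longrightarrow> Z \<le> 4/9*P \<Longrightarrow> Y \<le> Z \<Longrightarrow> 0 \<le> P \<Longrightarrow> 13 * (3/2 * X + Y/2) \<le> 54 * P"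
      by (simp add: algebra_simps)
    ultimately have "13 * (3/2 * (4*pi/3 - al)\<^sup>2 + de\<^sup>2/2) \<le> 54 * pi\<^sup>2"
      using a1 a2 de2 zero_le_power2[of pi] by metis
    then have "13/9 * ((3/2 * (4*pi/3 - al)\<^sup>2 + de\<^sup>2/2) / (4 * pi\<^sup>2)) \<le> 3/2"
      using pi0 by (simp add: field_simps)
    moreover have "1/4 \<le> C\<^sup>2" using C2 power_mono[OF C2, of 2] by (simp add: power2_eq_square)
    then have "3/2 \<le> 1/2 + 4 * C\<^sup>2" by simp
    ultimately show ?thesis using lhs unfolding Se[unfolded al_def] al_def by (meson order_trans)
  next
    case False
    have a1: "(4*pi/3 - al)\<^sup>2 \<le> (2*pi/3)\<^sup>2" using al0 False by (intro power_mono) auto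
    have a2: "al\<^sup>2 \<le> pi\<^sup>2" using al0 by (intro power_mono) auto
    have "(2*pi/3)\<^sup>2 = 4/9 * pi\<^sup>2" by (simp_all add: power2_eq_square)
    moreover have "\<And>X Y Z P::real. X \<le> 4/9*P \<Longrightarrow> Z \<le> P \<Longrightarrow> Y \<le> Z \<Longrightarrow> 0 \<le> P \<Longrightarrow> 13 * (3/2 * X + Y/2) \<le> 18 * P"
      by (simp add: algebra_simps)
    ultimately have "13 * (3/2 * (4*pi/3 - al)\<^sup>2 + de\<^sup>2/2) \<le> 18 * pi\<^sup>2"
      using a1 a2 de2 zero_le_power2[of pi] by metis
    then have "13/9 * ((3/2 * (4*pi/3 - al)\<^sup>2 + de\<^sup>2/2) / (4 * pi\<^sup>2)) \<le> 1/2"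
      using pi0 by (simp add: field_simps)
    moreover have "1/2 \<le> 1/2 + 4 * C\<^sup>2" by simp
    ultimately show ?thesis using lhs unfolding Se[unfolded al_def] al_def by (meson order_trans)
  qed
qed

lemma maxd_nonneg: "x \<le> y \<Longrightarrow> 0 \<le> max (y - a) 0 - max (x - a) (0::real)" by (simp add: max_def)
lemma maxd_le: "x \<le> y \<Longrightarrow> max (y - a) 0 - max (x - a) (0::real) \<le> y - x" by (simp add: max_def)
lemma maxd_eq: "a \<le> x \<Longrightarrow> x \<le> y \<Longrightarrow> max (y - a) 0 - max (x - a) (0::real) = y - x" by (simp add: max_def)
lemma maxd_0: "x \<le> a \<Longrightarrow> max (x - a) (0::real) = 0" by (simp add: max_def)

lemma core_concrete:
  fixes c t2 t3 S :: real
  assumes c: "c > 0" and t: "0 \<le> t2" "0 \<le> t3" "t2 + t3 \<le> pi"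
    and S: "S = ((2*pi - (t2+t3)) / (2*pi) - 1/3)\<^sup>2 + (t2 / (2*pi) - 1/3)\<^sup>2 + (t3 / (2*pi) - 1/3)\<^sup>2"
  shows "0 \<le> integral {0..pi} (\<lambda>v. qq (2*pi*S) (26*S/(9*pi)) (t2+t3) t2 t3 v * gg c v)"
proof -
  define A where "A = 2*pi*S"
  define k where "k = 26*S/(9*pi)"
  define al where "al = t2 + t3"
  define m where "m = min t2 t3"
  define p where "p = 2*pi/3"
  have pi3: "3 \<le> pi" using pi_gt3 by simp
  have S0: "0 \<le> S" unfolding S by simp
  have S23: "S \<le> 2/3"
  proof -
    define x1 where "x1 = (2*pi - (t2+t3)) / (2*pi)"
    define x2 where "x2 = t2 / (2*pi)"
    define x3 where "x3 = t3 / (2*pi)"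
    have sum: "x1 + x2 + x3 = 1" unfolding x1_def x2_def x3_def by (simp add: field_simps)
    have b: "0 \<le> x1" "x1 \<le> 1" "0 \<le> x2" "x2 \<le> 1" "0 \<le> x3" "x3 \<le> 1"
      using t pi3 unfolding x1_def x2_def x3_def by (auto simp: field_simps)
    have "x1\<^sup>2 \<le> x1" "x2\<^sup>2 \<le> x2" "x3\<^sup>2 \<le> x3" using b by (simp_all add: power2_eq_square mult_left_le)
    moreover have "S = x1\<^sup>2 + x2\<^sup>2 + x3\<^sup>2 - 2/3 * x1 - 2/3 * x2 - 2/3 * x3 + 1/3"
      unfolding S x1_def[symmetric] x2_def[symmetric] x3_def[symmetric] by (simp add: power2_eq_square algebra_simps)
    ultimately show ?thesis using sum by linarith
  qed
  have k0: "0 \<le> k" unfolding k_def using S0 by simp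
  have k1: "k \<le> 1" unfolding k_def using S23 pi3 by (simp add: field_simps)
  have kA: "k \<le> A"
  proof -
    have "26 \<le> 18 * pi * pi" using pi3 mult_mono[OF pi3 pi3] by simp
    then have "26 * S \<le> 18 * pi * pi * S" using S0 by (intro mult_right_mono) auto
    then show ?thesis unfolding k_def A_def using pi3 by (simp add: field_simps)
  qed
  have qeq: "qq (2*pi*S) (26*S/(9*pi)) (t2+t3) t2 t3 = qq A k al t2 t3" unfolding A_def k_def al_def ..
  have mp: "0 \<le> m" "m \<le> p" "p \<le> pi" using t pi3 unfolding m_def p_def by auto
  show ?thesis unfolding qeq
  proof (rule core_abstract[OF qq_cont c mp])
    fix u assume u: "0 \<le> u" "u \<le> m"
    have "u \<le> p" "u \<le> al" "u \<le> t2" "u \<le> t3" using u mp t unfolding m_def al_def by auto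
    then have "qq A k al t2 t3 u = A - k * cos u" unfolding qq_def p_def by (simp add: maxd_0)
    moreover have "k * cos u \<le> k" using k0 by (simp add: mult_left_le)
    ultimately show "0 \<le> qq A k al t2 t3 u" using kA by linarith
  next
    fix x y assume xy: "m \<le> x" "x \<le> y" "y \<le> p"
    have c1: "k * (cos x - cos y) \<le> y - x"
    proof -
      have "k * (cos x - cos y) \<le> k * (y - x)" using cos_lip[OF xy(2)] k0 by (intro mult_left_mono)
      also have "\<dots> \<le> 1 * (y - x)" using k1 xy by (intro mult_right_mono) auto
      finally show ?thesis by simp
    qed
    have p0: "max (x - p) 0 = 0" "max (y - p) 0 = 0" using xy by (auto simp: maxd_0)
    have d1: "0 \<le> max (y - al) 0 - max (x - al) 0" "0 \<le> max (y - t2) 0 - max (x - t2) 0" "0 \<le> max (y - t3) 0 - max (x - t3) 0"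
      using xy by (auto intro: maxd_nonneg)
    have d2: "max (y - t2) 0 - max (x - t2) 0 = y - x \<or> max (y - t3) 0 - max (x - t3) 0 = y - x"
      using xy unfolding m_def by (cases "t2 \<le> t3") (auto intro: maxd_eq)
    have c1': "k * cos x - k * cos y \<le> y - x" using c1 by (simp add: algebra_simps)
    show "qq A k al t2 t3 y \<le> qq A k al t2 t3 x"
      using d2
    proof (elim disjE)
      assume "max (y - t2) 0 - max (x - t2) 0 = y - x"
      then show ?thesis unfolding qq_def p_def[symmetric] using c1' d1 p0 by linarith
    next
      assume "max (y - t3) 0 - max (x - t3) 0 = y - x"
      then show ?thesis unfolding qq_def p_def[symmetric] using c1' d1 p0 by linarith
    qed
  next
    fix x y assume xy: "p \<le> x" "x \<le> y" "y \<le> pi"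
    have "cos y \<le> cos x" using xy mp by (intro cos_monotone_0_pi_le) auto
    then have c1: "0 \<le> k * (cos x - cos y)" using k0 by simp
    have p0: "max (y - p) 0 - max (x - p) 0 = y - x" using xy by (intro maxd_eq) auto
    have d1: "max (y - al) 0 - max (x - al) 0 \<le> y - x" "max (y - t2) 0 - max (x - t2) 0 \<le> y - x" "max (y - t3) 0 - max (x - t3) 0 \<le> y - x"
      using xy by (auto intro: maxd_le)
    have c1': "0 \<le> k * cos x - k * cos y" using c1 by (simp add: algebra_simps)
    show "qq A k al t2 t3 x \<le> qq A k al t2 t3 y"
      unfolding qq_def p_def[symmetric] using c1' d1 p0 by linarith
  next
    have b: "0 \<le> al" "al \<le> pi" "0 \<le> t2" "t2 \<le> pi" "0 \<le> t3" "t3 \<le> pi" using t unfolding al_def by auto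
    have "A * pi - k * 0 + 3 * ((pi - 2*pi/3)\<^sup>2/2) - (pi - al)\<^sup>2/2 - (pi - t2)\<^sup>2/2 - (pi - t3)\<^sup>2/2 = 0"
      unfolding A_def S al_def by (simp add: field_simps power2_eq_square)
    then show "integral {0..pi} (qq A k al t2 t3) = 0" using integral_unique[OF qq_int[OF b]] by simp
  next
    have b: "0 \<le> al" "al \<le> pi" "0 \<le> t2" "t2 \<le> pi" "0 \<le> t3" "t3 \<le> pi" using t unfolding al_def by auto
    have e: "A * 0 - k * (pi/2) + 3 * (-1 - cos (2*pi/3)) - (-1 - cos al) - (-1 - cos t2) - (-1 - cos t3)
       = 3/2 + cos al + cos t2 + cos t3 - 13/9 * S"
      unfolding k_def by (simp add: cos_120 cos_120' field_simps)
    have "13/9 * S \<le> 3/2 + cos al + cos t2 + cos t3" unfolding S al_def by (rule D1[OF t])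
    then show "0 \<le> integral {0..pi} (\<lambda>v. qq A k al t2 t3 v * cos v)"
      using integral_unique[OF qq_intcos[OF b]] e by simp
  qed
qed


lemma integral_rs:
  fixes f :: "real \<Rightarrow> real"
  shows "integral {a..b} (\<lambda>x. f (s - x)) = integral {s-b..s-a} f"
proof -
  have "integral {(a - s) - (-s) .. (b - s) - (-s)} (\<lambda>x. (\<lambda>y. f (-y)) (x + (-s))) = integral {a - s..b - s} (\<lambda>y. f (-y))"
    by (rule integral_shift_real_ivl)
  also have "\<dots> = integral {-(s-a)..-(s-b)} (\<lambda>y. f (-y))" by (simp add: algebra_simps)
  also have "\<dots> = integral {s-b..s-a} f" using Henstock_Kurzweil_Integration.integral_reflect_real[where a="s-b" and b="s-a" and f=f] by simp
  finally show ?thesis by (simp add: algebra_simps)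
qed

lemma gg_2pi: "gg c (2*pi - x) = gg c x"
  by (simp add: gg_def cos_diff)

lemma Z_eq: "(LBINT a=0..2*pi. exp (c * cos a)) = 2 * integral {0..pi} (gg c)"
proof -
  have "(LBINT a=0..2*pi. exp (c * cos a)) = integral {0..2*pi} (gg c)"
    unfolding zero_ereal_def gg_def by (rule LB_eq_integral) (auto intro!: continuous_intros)
  also have "\<dots> = integral {0..pi} (gg c) + integral {pi..2*pi} (gg c)"
    by (rule Henstock_Kurzweil_Integration.integral_combine[symmetric]) (auto intro: gg_int)
  also have "integral {pi..2*pi} (gg c) = integral {0..pi} (\<lambda>x. gg c (2*pi - x))"
    using integral_rs[of 0 pi "gg c" "2*pi"] by simp
  also have "\<dots> = integral {0..pi} (gg c)" by (simp add: gg_2pi)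
  finally show ?thesis by simp
qed

definition Kp :: "real \<Rightarrow> real \<Rightarrow> real" where
  "Kp c a = integral {0..pi} (\<lambda>u. max (a - u) 0 * gg c u)"

lemma T_small:
  assumes "0 \<le> a" "a \<le> pi"
  shows "integral {0..a} (\<lambda>u. (a - u) * gg c u) = Kp c a"
proof -
  have i: "(\<lambda>u. max (a - u) 0 * gg c u) integrable_on {0..pi}"
    by (intro integrable_continuous_interval continuous_intros)
  have "Kp c a = integral {0..a} (\<lambda>u. max (a - u) 0 * gg c u) + integral {a..pi} (\<lambda>u. max (a - u) 0 * gg c u)"
    unfolding Kp_def by (rule Henstock_Kurzweil_Integration.integral_combine[symmetric]) (use assms i in auto)
  also have "integral {a..pi} (\<lambda>u. max (a - u) 0 * gg c u) = integral {a..pi} (\<lambda>u. 0)"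
    by (rule integral_cong) (auto simp: max_def)
  also have "integral {0..a} (\<lambda>u. max (a - u) 0 * gg c u) = integral {0..a} (\<lambda>u. (a - u) * gg c u)"
    by (rule integral_cong) (auto simp: max_def)
  finally show ?thesis by simp
qed

lemma T_big:
  assumes "0 \<le> al" "al \<le> pi"
  shows "integral {0..2*pi - al} (\<lambda>u. (2*pi - al - u) * gg c u) = 2 * (pi - al) * integral {0..pi} (gg c) + Kp c al"
proof -
  have i: "(\<lambda>u. (2*pi - al - u) * gg c u) integrable_on {0..2*pi - al}"
    by (intro integrable_continuous_interval continuous_intros)
  have "integral {0..2*pi - al} (\<lambda>u. (2*pi - al - u) * gg c u) =
      integral {0..pi} (\<lambda>u. (2*pi - al - u) * gg c u) + integral {pi..2*pi - al} (\<lambda>u. (2*pi - al - u) * gg c u)"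
    by (rule Henstock_Kurzweil_Integration.integral_combine[symmetric]) (use assms i in auto)
  also have "integral {pi..2*pi - al} (\<lambda>u. (2*pi - al - u) * gg c u) = integral {al..pi} (\<lambda>v. (2*pi - al - (2*pi - v)) * gg c (2*pi - v))"
    using integral_rs[of al pi "\<lambda>u. (2*pi - al - u) * gg c u" "2*pi"] by simp
  also have "\<dots> = integral {al..pi} (\<lambda>v. max (v - al) 0 * gg c v)"
    by (rule integral_cong) (auto simp: gg_2pi max_def)
  also have "\<dots> = integral {0..pi} (\<lambda>v. max (v - al) 0 * gg c v)"
  proof -
    have i2: "(\<lambda>v. max (v - al) 0 * gg c v) integrable_on {0..pi}"
      by (intro integrable_continuous_interval continuous_intros)
    have "integral {0..al} (\<lambda>v. max (v - al) 0 * gg c v) = integral {0..al} (\<lambda>v. 0)"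
      by (rule integral_cong) (auto simp: max_def)
    then show ?thesis
      using Henstock_Kurzweil_Integration.integral_combine[OF assms i2] by simp
  qed
  also have "integral {0..pi} (\<lambda>u. (2*pi - al - u) * gg c u) + integral {0..pi} (\<lambda>v. max (v - al) 0 * gg c v)
      = integral {0..pi} (\<lambda>u. (2*pi - al - u) * gg c u + max (u - al) 0 * gg c u)"
    by (rule integral_add[symmetric]) (intro integrable_continuous_interval continuous_intros)+
  also have "\<dots> = integral {0..pi} (\<lambda>u. 2 * (pi - al) * gg c u + max (al - u) 0 * gg c u)"
    by (rule integral_cong) (auto simp: max_def algebra_simps)
  also have "\<dots> = 2 * (pi - al) * integral {0..pi} (gg c) + Kp c al"
    unfolding Kp_def
    by (subst integral_add) (auto intro!: integrable_continuous_interval continuous_intros simp: gg_cont)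
  finally show ?thesis .
qed

lemma maxsplit: "max (v - a) 0 = (v - a) + max (a - v) (0::real)" by (simp add: max_def)

lemma qq_alt: "qq A k (t2+t3) t2 t3 v = (A - 2*pi + 2*(t2+t3)) - k * cos v + 3 * max (2*pi/3 - v) 0
   - max (t2 + t3 - v) 0 - max (t2 - v) 0 - max (t3 - v) 0"
  unfolding qq_def maxsplit[of v] by (simp add: algebra_simps)

lemma qq_gg:
  fixes t2 t3 :: real
  shows "integral {0..pi} (\<lambda>v. qq A k (t2+t3) t2 t3 v * gg c v) =
    (A - 2*pi + 2*(t2+t3)) * integral {0..pi} (gg c) - k * integral {0..pi} (\<lambda>u. gg c u * cos u)
    + 3 * Kp c (2*pi/3) - Kp c (t2+t3) - Kp c t2 - Kp c t3"
proof -
  let ?al = "t2 + t3"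
  have hi: "((\<lambda>u. f u) has_integral integral {0..pi} f) {0..pi}" if "continuous_on {0..pi} f" for f :: "real \<Rightarrow> real"
    using that by (intro integrable_integral integrable_continuous_interval)
  have h: "((\<lambda>v. (A - 2*pi + 2*?al) * gg c v - k * (gg c v * cos v) + 3 * (max (2*pi/3 - v) 0 * gg c v)
      - max (?al - v) 0 * gg c v - max (t2 - v) 0 * gg c v - max (t3 - v) 0 * gg c v) has_integral
     ((A - 2*pi + 2*?al) * integral {0..pi} (gg c) - k * integral {0..pi} (\<lambda>u. gg c u * cos u)
    + 3 * Kp c (2*pi/3) - Kp c ?al - Kp c t2 - Kp c t3)) {0..pi}"
    unfolding Kp_def
    by (intro has_integral_diff has_integral_add has_integral_mult_right hi continuous_intros)
  have "((\<lambda>v. qq A k ?al t2 t3 v * gg c v) has_integral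
     ((A - 2*pi + 2*?al) * integral {0..pi} (gg c) - k * integral {0..pi} (\<lambda>u. gg c u * cos u)
    + 3 * Kp c (2*pi/3) - Kp c ?al - Kp c t2 - Kp c t3)) {0..pi}"
    by (rule has_integral_eq[OF _ h]) (simp add: qq_alt algebra_simps)
  then show ?thesis by (rule integral_unique)
qed

lemma final_alg:
  fixes z y S k I KA Kpp Kp2 Kp3 al t1 t2 t3 :: real
  assumes z: "z > 0" and t1: "t1 = 2*pi - al" and al: "al = t2 + t3"
    and KA: "KA = (2*pi*S - 2*pi + 2*al) * z - k * y + 3 * Kpp - Kp2 - Kp3 - I"
    and k: "k = 26*S/(9*pi)"
    and S: "S = ((2*pi - al)/(2*pi) - 1/3)\<^sup>2 + (t2/(2*pi) - 1/3)\<^sup>2 + (t3/(2*pi) - 1/3)\<^sup>2"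
  shows "- 3 * (Kpp / (2*pi*z) - (2*pi/3/(2*pi))\<^sup>2) + ((2*(pi-al)*z + KA)/(2*pi*z) - (t1/(2*pi))\<^sup>2
     + (Kp2/(2*pi*z) - (t2/(2*pi))\<^sup>2) + (Kp3/(2*pi*z) - (t3/(2*pi))\<^sup>2))
   = - (1/pi\<^sup>2) * (13/9) * (y/z) * ((t1/(2*pi) - 1/3)\<^sup>2 + (t2/(2*pi) - 1/3)\<^sup>2 + (t3/(2*pi) - 1/3)\<^sup>2) - I/(2*pi*z)"
proof -
  have p: "pi > 0" by simp
  have S': "(t1/(2*pi) - 1/3)\<^sup>2 + (t2/(2*pi) - 1/3)\<^sup>2 + (t3/(2*pi) - 1/3)\<^sup>2 = S" using S t1 by simp
  show ?thesis unfolding S' unfolding KA k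
    using z p unfolding t1 S al by (simp add: field_simps power2_eq_square)
qed

theorem lemma4p1:
  fixes c \<theta>1 \<theta>2 \<theta>3 :: real
  assumes "c > 0"
    and "\<theta>1 \<ge> 0" and "\<theta>2 \<ge> 0" and "\<theta>3 \<ge> 0"
    and "\<theta>1 + \<theta>2 + \<theta>3 = 2 * pi"
    and "\<theta>1 \<ge> pi"
  shows "- 3 * Fc c (2 * pi / 3) + (Fc c \<theta>1 + Fc c \<theta>2 + Fc c \<theta>3)
    \<le> - (1 / pi\<^sup>2) * (13 / 9) * (besselI 1 c / besselI 0 c) *
      ((\<theta>1 / (2 * pi) - 1/3)\<^sup>2 + (\<theta>2 / (2 * pi) - 1/3)\<^sup>2 + (\<theta>3 / (2 * pi) - 1/3)\<^sup>2)"
proof -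
  note c = assms(1)
  define al where "al = \<theta>2 + \<theta>3"
  have t1: "\<theta>1 = 2*pi - al" using assms(5) by (simp add: al_def)
  have al: "0 \<le> al" "al \<le> pi" using assms unfolding al_def by auto
  have t23: "\<theta>2 \<le> pi" "\<theta>3 \<le> pi" using assms by auto
  define z where "z = integral {0..pi} (gg c)"
  define y where "y = integral {0..pi} (\<lambda>u. gg c u * cos u)"
  have zpos: "z > 0"
  proof -
    have "integral {0..pi} (\<lambda>u. exp (- c)) \<le> z"
      unfolding z_def
    proof (rule integral_le)
      show "(\<lambda>u. exp (- c)) integrable_on {0..pi}" by (rule integrable_const_ivl)
      show "gg c integrable_on {0..pi}" by (rule gg_int)
      fix u :: real
      have "c * (-1) \<le> c * cos u" using c by (intro mult_left_mono) auto
      then have "- c \<le> c * cos u" by simp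
      then show "exp (- c) \<le> gg c u" unfolding gg_def by simp
    qed
    moreover have "integral {0..pi} (\<lambda>u. exp (- c)) = pi * exp (- c)" by simp
    moreover have "pi * exp (- c) > 0" by simp
    ultimately show ?thesis by linarith
  qed
  have gge: "gg c = (\<lambda>u. exp (c * cos u))" by (rule ext) (simp add: gg_def)
  have bes: "besselI 1 c / besselI 0 c = y / z"
    unfolding bessel0[OF c] bessel1[OF c] y_def z_def gge by simp
  have F: "Fc c t = integral {0..t} (\<lambda>u. (t - u) * gg c u) / (2*pi*z) - (t/(2*pi))\<^sup>2" if "0 \<le> t" for t
    unfolding Fc_def double_int[OF that] Z_eq z_def by simp
  have F2: "Fc c \<theta>2 = Kp c \<theta>2 / (2*pi*z) - (\<theta>2/(2*pi))\<^sup>2" using F[of \<theta>2] T_small[of \<theta>2] assms t23 by simp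
  have F3: "Fc c \<theta>3 = Kp c \<theta>3 / (2*pi*z) - (\<theta>3/(2*pi))\<^sup>2" using F[of \<theta>3] T_small[of \<theta>3] assms t23 by simp
  have Fp: "Fc c (2*pi/3) = Kp c (2*pi/3) / (2*pi*z) - (2*pi/3/(2*pi))\<^sup>2" using F[of "2*pi/3"] T_small[of "2*pi/3"] by simp
  have F1: "Fc c \<theta>1 = (2*(pi-al)*z + Kp c al) / (2*pi*z) - (\<theta>1/(2*pi))\<^sup>2"
    using F[of \<theta>1] T_big[OF al, of c] assms(2) unfolding t1 z_def by simp
  define S where "S = ((2*pi - (\<theta>2+\<theta>3)) / (2*pi) - 1/3)\<^sup>2 + (\<theta>2 / (2*pi) - 1/3)\<^sup>2 + (\<theta>3 / (2*pi) - 1/3)\<^sup>2"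
  define k where "k = 26*S/(9*pi)"
  define I where "I = integral {0..pi} (\<lambda>v. qq (2*pi*S) k (\<theta>2+\<theta>3) \<theta>2 \<theta>3 v * gg c v)"
  have I0: "0 \<le> I" unfolding I_def k_def
    by (rule core_concrete[OF c assms(3,4) _ S_def]) (use al in \<open>simp add: al_def\<close>)
  have Ie: "I = (2*pi*S - 2*pi + 2*al) * z - k * y + 3 * Kp c (2*pi/3) - Kp c al - Kp c \<theta>2 - Kp c \<theta>3"
    unfolding I_def qq_gg z_def y_def al_def ..
  have KA: "Kp c al = (2*pi*S - 2*pi + 2*al) * z - k * y + 3 * Kp c (2*pi/3) - Kp c \<theta>2 - Kp c \<theta>3 - I"
    using Ie by simp
  have eq: "- 3 * Fc c (2 * pi / 3) + (Fc c \<theta>1 + Fc c \<theta>2 + Fc c \<theta>3)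
     = - (1/pi\<^sup>2) * (13/9) * (y/z) * ((\<theta>1/(2*pi) - 1/3)\<^sup>2 + (\<theta>2/(2*pi) - 1/3)\<^sup>2 + (\<theta>3/(2*pi) - 1/3)\<^sup>2) - I/(2*pi*z)"
    unfolding F1 F2 F3 Fp
    by (rule final_alg[OF zpos t1 al_def KA k_def]) (simp add: S_def al_def)
  have "0 \<le> I / (2*pi*z)" using I0 zpos by simp
  then show ?thesis unfolding bes eq by simp
qed

end
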